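(* If $\mathfrak{g}$ is either atom or loose guards, then for $k>0$ and $\sigma$-structures $\mathcal{A},\mathcal{B}$, there is a bijective correspondence between (1) coKleisli morphisms ($\sigma$-homomorphisms) $\mathbb{G}_{k}^{\mathfrak{g}} \mathcal{A} \to \mathcal{B}$, and (2) winning strategies for Duplicator in the $\mathfrak{g}$-guarded $k$-bounded simulation game from $\mathcal{A}$ to $\mathcal{B}$. Thus $\mathcal{A} \preceq^{\mathfrak{g}}_{k} \mathcal{B}$ iff there is a homomorphism $\mathbb{G}_{k}^{\mathfrak{g}} \mathcal{A} \to \mathcal{B}$.
   Context: A set is $k$-guarded (atom/loose) if contained in the support of a tuple of length at most $k$ satisfying an atom/loose guard. $\mathbb{G}_k^{\mathfrak{g}}\mathcal{A}$ is the $\sigma$-structure whose universe consists of equivalence classes $[p,a]$ of focussed plays $\langle p,a\rangle$, where $p=[U_1,\ldots,U_n]$ is a non-empty list of $k$-guarded $\mathfrak{g}$-guarded sets of $\mathcal{A}$ and $a\in U_n$; $\langle p,a\rangle\sim\langle q,a'\rangle$ iff $a=a'$, the greatest common prefix $p\sqcap q$ is non-empty, and $a$ lies in the last element of every play on the prefix-order paths from $p\sqcap q$ to $p$ and to $q$; $R^{\mathbb{G}_k\mathcal{A}} = \{([p,a_1],\ldots,[p,a_r]) \mid R^{\mathcal{A}}(a_1,\ldots,a_r)\}$. The $k$-bounded $\mathfrak{g}$-guarded simulation game from $\mathcal{A}$ to $\mathcal{B}$: starting with $X_0=\varnothing,\varphi_0=\varnothing$, in each round Spoiler picks a $k$-guarded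 set $X_{n+1}$ in $\mathcal{A}$ and Duplicator responds with a $k$-guarded set $Y_{n+1}$ in $\mathcal{B}$ and a partial homomorphism $\varphi_{n+1}:X_{n+1}\to Y_{n+1}$ agreeing with $\varphi_n$ on $X_{n+1}\cap X_n$; Duplicator wins if he can always respond. $\mathcal{A}\preceq^{\mathfrak{g}}_k\mathcal{B}$ means Duplicator has a winning strategy. *)

theory Defs
  imports Main "HOL-Library.Sublist" "HOL-Library.FuncSet"
begin

record ('r, 'a) struc =
  univ :: "'a set"
  rels :: "'r \<Rightarrow> 'a list set"

definition wf_struc :: "('r \<Rightarrow> nat) \<Rightarrow> ('r, 'a) struc \<Rightarrow> bool" where
  "wf_struc ar A \<longleftrightarrow> (\<forall>R t. t \<in> rels A R \<longrightarrow> length t = ar R \<and> set t \<subseteq> univ A)"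

datatype guard = AtomG | LooseG

text \<open>A tuple satisfies an atom guard: an atom R(...) whose variables are exactly
  those of the tuple holds of it, or an equality atom x = x (singleton support).
  A tuple satisfies a loose guard: a conjunction of atoms over the variables of the
  tuple in which every pair of variables co-occurs in some atom.\<close>

definition satisfies_guard :: "guard \<Rightarrow> ('r, 'a) struc \<Rightarrow> 'a list \<Rightarrow> bool" where
  "satisfies_guard g A as \<longleftrightarrow> as \<noteq> [] \<and> set as \<subseteq> univ A \<and>
     (case g of
        AtomG \<Rightarrow> (\<exists>x. set as = {x}) \<or> (\<exists>R t. t \<in> rels A R \<and> set t = set as)
      | LooseG \<Rightarrow> (\<forall>a\<in>set as. \<forall>b\<in>set as. a = b \<or>
                   (\<exists>R t. t \<in> rels A R \<and> set t \<subseteq> set as \<and> a \<in> set t \<and> b \<in> set t)))"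

definition kguarded :: "nat \<Rightarrow> guard \<Rightarrow> ('r, 'a) struc \<Rightarrow> 'a set \<Rightarrow> bool" where
  "kguarded k g A X \<longleftrightarrow> (\<exists>as. length as \<le> k \<and> satisfies_guard g A as \<and> X \<subseteq> set as)"

definition plays :: "nat \<Rightarrow> guard \<Rightarrow> ('r, 'a) struc \<Rightarrow> 'a set list set" where
  "plays k g A = {p. p \<noteq> [] \<and> (\<forall>X\<in>set p. kguarded k g A X)}"

definition fplays :: "nat \<Rightarrow> guard \<Rightarrow> ('r, 'a) struc \<Rightarrow> ('a set list \<times> 'a) set" where
  "fplays k g A = {(p, a). p \<in> plays k g A \<and> a \<in> last p}"

definition play_equiv :: "nat \<Rightarrow> guard \<Rightarrow> ('r, 'a) struc \<Rightarrow> (('a set list \<times> 'a) \<times> ('a set list \<times> 'a)) set" where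
  "play_equiv k g A = {((p, a), (q, a')). (p, a) \<in> fplays k g A \<and> (q, a') \<in> fplays k g A \<and>
      a = a' \<and> longest_common_prefix p q \<noteq> [] \<and>
      (\<forall>r. prefix (longest_common_prefix p q) r \<and> prefix r p \<longrightarrow> a \<in> last r) \<and>
      (\<forall>r. prefix (longest_common_prefix p q) r \<and> prefix r q \<longrightarrow> a \<in> last r)}"

definition pcls :: "nat \<Rightarrow> guard \<Rightarrow> ('r, 'a) struc \<Rightarrow> 'a set list \<Rightarrow> 'a \<Rightarrow> ('a set list \<times> 'a) set" where
  "pcls k g A p a = play_equiv k g A `` {(p, a)}"

definition Gk :: "nat \<Rightarrow> guard \<Rightarrow> ('r, 'a) struc \<Rightarrow> ('r, ('a set list \<times> 'a) set) struc" where
  "Gk k g A = \<lparr> univ = fplays k g A // play_equiv k g A,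
     rels = (\<lambda>R. {map (pcls k g A p) t | p t. p \<in> plays k g A \<and> t \<in> rels A R \<and> set t \<subseteq> last p}) \<rparr>"

definition is_hom :: "('r, 'a) struc \<Rightarrow> ('r, 'b) struc \<Rightarrow> ('a \<Rightarrow> 'b) \<Rightarrow> bool" where
  "is_hom A B h \<longleftrightarrow> h \<in> univ A \<rightarrow> univ B \<and> (\<forall>R t. t \<in> rels A R \<longrightarrow> map h t \<in> rels B R)"

text \<open>Homomorphisms as extensional functions (so that they form a set in bijection).\<close>

definition homs :: "('r, 'a) struc \<Rightarrow> ('r, 'b) struc \<Rightarrow> ('a \<Rightarrow> 'b) set" where
  "homs A B = {h \<in> univ A \<rightarrow>\<^sub>E univ B. is_hom A B h}"

definition partial_hom :: "('r, 'a) struc \<Rightarrow> ('r, 'b) struc \<Rightarrow> 'a set \<Rightarrow> ('a \<Rightarrow> 'b) \<Rightarrow> bool" where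
  "partial_hom A B X f \<longleftrightarrow> f \<in> X \<rightarrow> univ B \<and>
     (\<forall>R t. t \<in> rels A R \<and> set t \<subseteq> X \<longrightarrow> map f t \<in> rels B R)"

text \<open>Duplicator strategies in the k-bounded g-guarded simulation game from A to B:
  to each sequence of Spoiler moves p = [X_1,...,X_n] the strategy assigns the
  partial homomorphism phi_n : X_n \<rightarrow> Y_n (as an extensional function on X_n),
  where Y_n is some k-guarded set of B.\<close>

definition win_strategies ::
  "nat \<Rightarrow> guard \<Rightarrow> ('r, 'a) struc \<Rightarrow> ('r, 'b) struc \<Rightarrow> ('a set list \<Rightarrow> 'a \<Rightarrow> 'b) set" where
  "win_strategies k g A B =
    {S \<in> (\<Pi>\<^sub>E p \<in> plays k g A. last p \<rightarrow>\<^sub>E univ B).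
       (\<forall>p \<in> plays k g A.
          partial_hom A B (last p) (S p) \<and>
          (\<exists>Y. kguarded k g B Y \<and> S p ` last p \<subseteq> Y)) \<and>
       (\<forall>p X. p \<in> plays k g A \<and> kguarded k g A X \<longrightarrow>
          (\<forall>a \<in> X \<inter> last p. S (p @ [X]) a = S p a))}"

definition guarded_sim :: "nat \<Rightarrow> guard \<Rightarrow> ('r, 'a) struc \<Rightarrow> ('r, 'b) struc \<Rightarrow> bool" where
  "guarded_sim k g A B \<longleftrightarrow> win_strategies k g A B \<noteq> {}"

definition hom_to_strategy ::
  "nat \<Rightarrow> guard \<Rightarrow> ('r, 'a) struc \<Rightarrow> (('a set list \<times> 'a) set \<Rightarrow> 'b) \<Rightarrow> ('a set list \<Rightarrow> 'a \<Rightarrow> 'b)" where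
  "hom_to_strategy k g A h = (\<lambda>p \<in> plays k g A. \<lambda>a \<in> last p. h (pcls k g A p a))"

end

theory Submission
  imports Defs
begin

lemma pe_char:
  "((p,a),(q,b)) \<in> play_equiv k g A \<longleftrightarrow> (p,a)\<in>fplays k g A \<and> (q,b)\<in>fplays k g A \<and> a=b \<and>
    (\<exists>m. m\<noteq>[] \<and> prefix m p \<and> prefix m q \<and> (\<forall>r. prefix m r \<and> prefix r p \<longrightarrow> a\<in>last r)
        \<and> (\<forall>r. prefix m r \<and> prefix r q \<longrightarrow> a\<in>last r))"
proof
  assume "((p,a),(q,b)) \<in> play_equiv k g A"
  then show "(p,a)\<in>fplays k g A \<and> (q,b)\<in>fplays k g A \<and> a=b \<and>
    (\<exists>m. m\<noteq>[] \<and> prefix m p \<and> prefix m q \<and> (\<forall>r. prefix m r \<and> prefix r p \<longrightarrow> a\<in>last r)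
        \<and> (\<forall>r. prefix m r \<and> prefix r q \<longrightarrow> a\<in>last r))"
    unfolding play_equiv_def
    using longest_common_prefix_prefix1 longest_common_prefix_prefix2 by blast
next
  assume H: "(p,a)\<in>fplays k g A \<and> (q,b)\<in>fplays k g A \<and> a=b \<and>
    (\<exists>m. m\<noteq>[] \<and> prefix m p \<and> prefix m q \<and> (\<forall>r. prefix m r \<and> prefix r p \<longrightarrow> a\<in>last r)
        \<and> (\<forall>r. prefix m r \<and> prefix r q \<longrightarrow> a\<in>last r))"
  then obtain m where m: "m\<noteq>[]" "prefix m p" "prefix m q" "\<forall>r. prefix m r \<and> prefix r p \<longrightarrow> a\<in>last r"
     "\<forall>r. prefix m r \<and> prefix r q \<longrightarrow> a\<in>last r" by blast
  have pm: "prefix m (longest_common_prefix p q)"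
    using m longest_common_prefix_max_prefix by blast
  hence "longest_common_prefix p q \<noteq> []" using m(1) by auto
  moreover have "\<forall>r. prefix (longest_common_prefix p q) r \<longrightarrow> prefix m r"
    using pm by (meson prefix_order.trans)
  ultimately show "((p,a),(q,b)) \<in> play_equiv k g A"
    unfolding play_equiv_def using H m by auto
qed

lemma pe_equiv: "equiv (fplays k g A) (play_equiv k g A)"
proof (rule equivI)
  show "play_equiv k g A \<subseteq> fplays k g A \<times> fplays k g A"
    unfolding play_equiv_def by auto
  show "refl_on (fplays k g A) (play_equiv k g A)"
  proof (rule refl_onI)
    fix x assume x: "x \<in> fplays k g A"
    obtain p a where xe: "x = (p,a)" by fastforce
    have "p \<noteq> []" "a \<in> last p" using x xe by (auto simp: fplays_def plays_def)
    moreover have "\<forall>r. prefix p r \<and> prefix r p \<longrightarrow> a\<in>last r" using calculation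
      by (metis prefix_order.antisym)
    ultimately show "(x,x) \<in> play_equiv k g A" using x
      unfolding xe pe_char by blast
  qed
  show "sym (play_equiv k g A)"
    by (rule symI) (auto simp: pe_char)
  show "trans (play_equiv k g A)"
  proof (rule transI)
    fix x y z assume xy: "(x,y) \<in> play_equiv k g A" and yz: "(y,z) \<in> play_equiv k g A"
    obtain p a where x: "x = (p,a)" by fastforce
    obtain q b where y: "y = (q,b)" by fastforce
    obtain s c where z: "z = (s,c)" by fastforce
    from xy[unfolded x y pe_char] obtain m1 where
      h1: "(p,a)\<in>fplays k g A" "(q,b)\<in>fplays k g A" "a = b" "m1\<noteq>[]" "prefix m1 p" "prefix m1 q"
      "\<forall>r. prefix m1 r \<and> prefix r p \<longrightarrow> a\<in>last r" "\<forall>r. prefix m1 r \<and> prefix r q \<longrightarrow> a\<in>last r"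
      by blast
    from yz[unfolded y z pe_char] obtain m2 where
      h2: "(s,c)\<in>fplays k g A" "b = c" "m2\<noteq>[]" "prefix m2 q" "prefix m2 s"
      "\<forall>r. prefix m2 r \<and> prefix r q \<longrightarrow> b\<in>last r" "\<forall>r. prefix m2 r \<and> prefix r s \<longrightarrow> b\<in>last r"
      by blast
    have "prefix m1 m2 \<or> prefix m2 m1" using h1(6) h2(4) prefix_same_cases by blast
    then have "\<exists>m. m\<noteq>[] \<and> prefix m p \<and> prefix m s \<and> (\<forall>r. prefix m r \<and> prefix r p \<longrightarrow> a\<in>last r)
        \<and> (\<forall>r. prefix m r \<and> prefix r s \<longrightarrow> a\<in>last r)"
    proof
      assume c: "prefix m1 m2"
      have "\<forall>r. prefix m1 r \<and> prefix r s \<longrightarrow> a\<in>last r"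
      proof (intro allI impI)
        fix r assume r: "prefix m1 r \<and> prefix r s"
        have "prefix r m2 \<or> prefix m2 r" using r h2(5) prefix_same_cases by blast
        then show "a \<in> last r"
        proof
          assume "prefix r m2" then show ?thesis using h1 r h2(4) by (meson prefix_order.trans)
        next
          assume "prefix m2 r" then show ?thesis using h2 r h1(3) by blast
        qed
      qed
      then show ?thesis using h1 h2 c by (meson prefix_order.trans)
    next
      assume c: "prefix m2 m1"
      have "\<forall>r. prefix m2 r \<and> prefix r p \<longrightarrow> a\<in>last r"
      proof (intro allI impI)
        fix r assume r: "prefix m2 r \<and> prefix r p"
        have "prefix r m1 \<or> prefix m1 r" using r h1(5) prefix_same_cases by blast
        then show "a \<in> last r"
        proof
          assume "prefix r m1" then show ?thesis using h2 r h1(6) h1(3) by (meson prefix_order.trans)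
        next
          assume "prefix m1 r" then show ?thesis using h1 r by blast
        qed
      qed
      then show ?thesis using h1 h2 c by (meson prefix_order.trans)
    qed
    then show "(x,z) \<in> play_equiv k g A" unfolding x z pe_char using h1 h2 by blast
  qed
qed


lemma pcls_in: "(p,a) \<in> fplays k g A \<Longrightarrow> pcls k g A p a \<in> univ (Gk k g A)"
  unfolding pcls_def Gk_def by (simp add: quotientI)

lemma pcls_self: "(p,a) \<in> fplays k g A \<Longrightarrow> (p,a) \<in> pcls k g A p a"
  unfolding pcls_def using pe_equiv equiv_class_self by metis

lemma rels_Gk: "rels (Gk k g A) R = {map (pcls k g A p) t | p t. p \<in> plays k g A \<and> t \<in> rels A R \<and> set t \<subseteq> last p}"
  unfolding Gk_def by simp

lemma univ_Gk: "univ (Gk k g A) = fplays k g A // play_equiv k g A"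
  unfolding Gk_def by simp

lemma prefix_between_snoc:
  assumes "prefix p r" "prefix r (p @ [X])" shows "r = p \<or> r = p @ [X]"
  using assms by (metis prefix_order.antisym prefix_snoc)

lemma snoc_plays: "p \<in> plays k g A \<Longrightarrow> kguarded k g A X \<Longrightarrow> p @ [X] \<in> plays k g A"
  unfolding plays_def by auto

lemma pcls_snoc:
  assumes p: "p \<in> plays k g A" and X: "kguarded k g A X" and a: "a \<in> X" "a \<in> last p"
  shows "pcls k g A (p @ [X]) a = pcls k g A p a"
proof -
  have f1: "(p,a) \<in> fplays k g A" using p a by (simp add: fplays_def)
  have f2: "(p@[X],a) \<in> fplays k g A" using p X a by (simp add: fplays_def snoc_plays)
  have pn: "p \<noteq> []" using p by (simp add: plays_def)
  have "((p@[X],a),(p,a)) \<in> play_equiv k g A"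
    unfolding pe_char
  proof (intro conjI exI[of _ p])
    show "\<forall>r. prefix p r \<and> prefix r (p @ [X]) \<longrightarrow> a \<in> last r"
      using prefix_between_snoc a by fastforce
    show "\<forall>r. prefix p r \<and> prefix r p \<longrightarrow> a \<in> last r"
      using a by (metis prefix_order.antisym)
  qed (use f1 f2 pn in auto)
  then show ?thesis unfolding pcls_def
    using pe_equiv equiv_class_eq_iff by metis
qed

lemma path_lemma:
  assumes agree: "\<forall>p X. p \<in> plays k g A \<and> kguarded k g A X \<longrightarrow> (\<forall>a\<in>X \<inter> last p. S (p@[X]) a = S p a)"
  shows "m \<noteq> [] \<Longrightarrow> prefix m p \<Longrightarrow> p \<in> plays k g A \<Longrightarrow> (\<forall>r. prefix m r \<and> prefix r p \<longrightarrow> a\<in>last r)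
     \<Longrightarrow> S p a = S m a"
proof (induction p rule: rev_induct)
  case Nil
  then show ?case by simp
next
  case (snoc X p')
  show ?case
  proof (cases "m = p' @ [X]")
    case True then show ?thesis by simp
  next
    case False
    then have pm: "prefix m p'" using snoc.prems(2) by (simp add: prefix_snoc)
    have p'n: "p' \<noteq> []" using pm snoc.prems(1) by auto
    have pl: "p' \<in> plays k g A" using snoc.prems(3) p'n by (simp add: plays_def)
    have Xg: "kguarded k g A X" using snoc.prems(3) by (simp add: plays_def)
    have "\<forall>r. prefix m r \<and> prefix r p' \<longrightarrow> a\<in>last r"
    proof (intro allI impI)
      fix r assume r: "prefix m r \<and> prefix r p'"
      then have "prefix r (p' @ [X])" by (simp add: prefix_snoc)
      then show "a \<in> last r" using r snoc.prems(4) by blast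
    qed
    then have IH: "S p' a = S m a" by (rule snoc.IH[OF snoc.prems(1) pm pl])
    have "prefix p' (p' @ [X])" by simp
    then have a1: "a \<in> last p'" using snoc.prems(4) pm by blast
    have "a \<in> last (p' @ [X])" using snoc.prems(4) snoc.prems(2) prefix_order.refl by blast
    then have a2: "a \<in> X" by simp
    have "\<forall>a\<in>X \<inter> last p'. S (p'@[X]) a = S p' a" using agree pl Xg by blast
    then have "S (p' @ [X]) a = S p' a" using a1 a2 by blast
    then show ?thesis using IH by simp
  qed
qed

lemma strat_equiv:
  assumes S: "S \<in> win_strategies k g A B" and e: "((p,a),(q,b)) \<in> play_equiv k g A"
  shows "S p a = S q b"
proof -
  have W: "S \<in> (\<Pi>\<^sub>E p \<in> plays k g A. last p \<rightarrow>\<^sub>E univ B) \<and>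
       (\<forall>p \<in> plays k g A.
          partial_hom A B (last p) (S p) \<and>
          (\<exists>Y. kguarded k g B Y \<and> S p ` last p \<subseteq> Y)) \<and>
       (\<forall>p X. p \<in> plays k g A \<and> kguarded k g A X \<longrightarrow>
          (\<forall>a \<in> X \<inter> last p. S (p @ [X]) a = S p a))"
    using S unfolding win_strategies_def by (rule CollectD)
  have agree: "\<forall>p X. p \<in> plays k g A \<and> kguarded k g A X \<longrightarrow> (\<forall>a\<in>X \<inter> last p. S (p@[X]) a = S p a)"
    using W by (elim conjE)
  from e[unfolded pe_char] obtain m where h: "(p,a)\<in>fplays k g A" "(q,b)\<in>fplays k g A" "a = b" "m\<noteq>[]" "prefix m p" "prefix m q"
      "\<forall>r. prefix m r \<and> prefix r p \<longrightarrow> a\<in>last r" "\<forall>r. prefix m r \<and> prefix r q \<longrightarrow> a\<in>last r"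
    by blast
  have "p \<in> plays k g A" "q \<in> plays k g A" using h by (auto simp: fplays_def)
  then have "S p a = S m a" "S q a = S m a"
    using path_lemma[OF agree h(4) h(5)] path_lemma[OF agree h(4) h(6)] h(7,8) h(3) by auto
  then show ?thesis using h(3) by simp
qed


lemma hom_guard:
  assumes h: "is_hom (Gk k g A) B h" and p: "p \<in> plays k g A"
  shows "\<exists>Y. kguarded k g B Y \<and> (\<lambda>a. h (pcls k g A p a)) ` last p \<subseteq> Y"
proof -
  have "kguarded k g A (last p)" using p by (simp add: plays_def)
  then obtain as where as: "length as \<le> k" "satisfies_guard g A as" "last p \<subseteq> set as"
    unfolding kguarded_def by blast
  have asg: "kguarded k g A (set as)" using as unfolding kguarded_def by blast
  define q where "q = p @ [set as]"
  have q: "q \<in> plays k g A" unfolding q_def using p asg by (rule snoc_plays)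
  define f where "f = (\<lambda>b. h (pcls k g A q b))"
  have img: "(\<lambda>a. h (pcls k g A p a)) ` last p \<subseteq> set (map f as)"
  proof
    fix y assume "y \<in> (\<lambda>a. h (pcls k g A p a)) ` last p"
    then obtain a where a: "a \<in> last p" "y = h (pcls k g A p a)" by blast
    have "pcls k g A q a = pcls k g A p a"
      unfolding q_def using pcls_snoc[OF p asg] a as(3) by blast
    then have "y = f a" using a by (simp add: f_def)
    moreover have "a \<in> set as" using a as(3) by blast
    ultimately show "y \<in> set (map f as)" by simp
  qed
  have fU: "f b \<in> univ B" if "b \<in> set as" for b
  proof -
    have "(q,b) \<in> fplays k g A" using q that by (simp add: fplays_def q_def)
    then have "pcls k g A q b \<in> univ (Gk k g A)" by (rule pcls_in)
    moreover have "h \<in> univ (Gk k g A) \<rightarrow> univ B" using h unfolding is_hom_def by blast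
    ultimately show ?thesis unfolding f_def by blast
  qed
  have rel: "map f t \<in> rels B R" if "t \<in> rels A R" "set t \<subseteq> set as" for R t
  proof -
    have "set t \<subseteq> last q" using that(2) by (simp add: q_def)
    then have "map (pcls k g A q) t \<in> rels (Gk k g A) R"
      unfolding rels_Gk using q that(1) by blast
    then have "map h (map (pcls k g A q) t) \<in> rels B R" using h unfolding is_hom_def by blast
    then show ?thesis by (simp add: f_def o_def)
  qed
  have "satisfies_guard g B (map f as)"
  proof (cases g)
    case AtomG
    then have "(\<exists>x. set as = {x}) \<or> (\<exists>R t. t \<in> rels A R \<and> set t = set as)" "as \<noteq> []"
      using as(2) unfolding satisfies_guard_def by auto
    moreover have "(\<exists>x. set (map f as) = {x}) \<or> (\<exists>R t. t \<in> rels B R \<and> set t = set (map f as))"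
      using calculation(1)
    proof
      assume "\<exists>x. set as = {x}" then show ?thesis by auto
    next
      assume "\<exists>R t. t \<in> rels A R \<and> set t = set as"
      then obtain R t where t: "t \<in> rels A R" "set t = set as" by blast
      then have "map f t \<in> rels B R" using rel by simp
      moreover have "set (map f t) = set (map f as)" using t by simp
      ultimately show ?thesis by blast
    qed
    ultimately show ?thesis using AtomG fU unfolding satisfies_guard_def by auto
  next
    case LooseG
    then have ne: "as \<noteq> []" and L: "\<forall>a\<in>set as. \<forall>b\<in>set as. a = b \<or>
                   (\<exists>R t. t \<in> rels A R \<and> set t \<subseteq> set as \<and> a \<in> set t \<and> b \<in> set t)"
      using as(2) unfolding satisfies_guard_def by auto
    have "\<forall>a\<in>set (map f as). \<forall>b\<in>set (map f as). a = b \<or>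
                   (\<exists>R t. t \<in> rels B R \<and> set t \<subseteq> set (map f as) \<and> a \<in> set t \<and> b \<in> set t)"
    proof (intro ballI)
      fix a' b' assume "a' \<in> set (map f as)" "b' \<in> set (map f as)"
      then obtain a b where ab: "a \<in> set as" "b \<in> set as" "a' = f a" "b' = f b" by auto
      from L ab(1,2) have "a = b \<or> (\<exists>R t. t \<in> rels A R \<and> set t \<subseteq> set as \<and> a \<in> set t \<and> b \<in> set t)"
        by blast
      then show "a' = b' \<or>
                   (\<exists>R t. t \<in> rels B R \<and> set t \<subseteq> set (map f as) \<and> a' \<in> set t \<and> b' \<in> set t)"
      proof
        assume "a = b" then show ?thesis using ab by simp
      next
        assume "\<exists>R t. t \<in> rels A R \<and> set t \<subseteq> set as \<and> a \<in> set t \<and> b \<in> set t"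
        then obtain R t where t: "t \<in> rels A R" "set t \<subseteq> set as" "a \<in> set t" "b \<in> set t" by blast
        then have "map f t \<in> rels B R" using rel by simp
        moreover have "set (map f t) \<subseteq> set (map f as)" using t by auto
        moreover have "a' \<in> set (map f t)" "b' \<in> set (map f t)" using t ab by auto
        ultimately show ?thesis by blast
      qed
    qed
    then show ?thesis using LooseG fU ne unfolding satisfies_guard_def by auto
  qed
  then have "kguarded k g B (set (map f as))" unfolding kguarded_def using as(1)
    by (intro exI[of _ "map f as"]) auto
  then show ?thesis using img by blast
qed


lemma h2s_win:
  assumes h: "h \<in> homs (Gk k g A) B"
  shows "hom_to_strategy k g A h \<in> win_strategies k g A B"
proof -
  let ?S = "hom_to_strategy k g A h"
  have hh: "is_hom (Gk k g A) B h" using h by (simp add: homs_def)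
  have hU: "h (pcls k g A p a) \<in> univ B" if "p \<in> plays k g A" "a \<in> last p" for p a
    using that pcls_in[of p a k g A] hh unfolding is_hom_def fplays_def by blast
  have Sp: "?S p = (\<lambda>a\<in>last p. h (pcls k g A p a))" if "p \<in> plays k g A" for p
    using that by (simp add: hom_to_strategy_def)
  have 1: "?S \<in> (\<Pi>\<^sub>E p \<in> plays k g A. last p \<rightarrow>\<^sub>E univ B)"
    using hU by (auto simp: hom_to_strategy_def PiE_def extensional_def)
  have 2: "partial_hom A B (last p) (?S p) \<and> (\<exists>Y. kguarded k g B Y \<and> ?S p ` last p \<subseteq> Y)"
    if p: "p \<in> plays k g A" for p
  proof
    have "map (?S p) t \<in> rels B R" if t: "t \<in> rels A R" "set t \<subseteq> last p" for R t
    proof -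
      have "map (pcls k g A p) t \<in> rels (Gk k g A) R" unfolding rels_Gk using p t by blast
      then have R: "map h (map (pcls k g A p) t) \<in> rels B R" using hh unfolding is_hom_def by blast
      have eqS: "map (?S p) t = map h (map (pcls k g A p) t)"
        unfolding map_map by (rule map_cong[OF refl]) (use t Sp[OF p] in auto)
      show ?thesis unfolding eqS by (rule R)
    qed
    then show "partial_hom A B (last p) (?S p)" unfolding partial_hom_def
      using hU p Sp[OF p] by auto
    have "?S p ` last p = (\<lambda>a. h (pcls k g A p a)) ` last p" using Sp[OF p] by auto
    then show "\<exists>Y. kguarded k g B Y \<and> ?S p ` last p \<subseteq> Y" using hom_guard[OF hh p] by simp
  qed
  have 3: "\<forall>a \<in> X \<inter> last p. ?S (p @ [X]) a = ?S p a"
    if "p \<in> plays k g A" "kguarded k g A X" for p X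
  proof
    fix a assume a: "a \<in> X \<inter> last p"
    have "p @ [X] \<in> plays k g A" using that by (rule snoc_plays)
    then have "?S (p @ [X]) a = h (pcls k g A (p @ [X]) a)" using a Sp by simp
    also have "\<dots> = h (pcls k g A p a)" using pcls_snoc[OF that] a by simp
    also have "\<dots> = ?S p a" using a Sp that by simp
    finally show "?S (p @ [X]) a = ?S p a" .
  qed
  show ?thesis unfolding win_strategies_def using 1 2 3 by blast
qed


lemma univ_Gk_cases:
  assumes "C \<in> univ (Gk k g A)"
  obtains p a where "(p,a) \<in> fplays k g A" "C = pcls k g A p a"
  using assms unfolding univ_Gk pcls_def by (auto elim!: quotientE)

lemma h2s_inj: "inj_on (hom_to_strategy k g A) (homs (Gk k g A) B)"
proof (rule inj_onI)
  fix h1 h2 assume h1: "h1 \<in> homs (Gk k g A) B" and h2: "h2 \<in> homs (Gk k g A) B"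
    and eq: "hom_to_strategy k g A h1 = hom_to_strategy k g A h2"
  show "h1 = h2"
  proof (rule ext)
    fix C
    show "h1 C = h2 C"
    proof (cases "C \<in> univ (Gk k g A)")
      case True
      then obtain p a where pa: "(p,a) \<in> fplays k g A" "C = pcls k g A p a" by (rule univ_Gk_cases)
      have "hom_to_strategy k g A h1 p a = hom_to_strategy k g A h2 p a" using eq by simp
      moreover have "p \<in> plays k g A" "a \<in> last p" using pa(1) by (auto simp: fplays_def)
      ultimately have "h1 (pcls k g A p a) = h2 (pcls k g A p a)" by (simp add: hom_to_strategy_def)
      then show ?thesis unfolding pa(2) .
    next
      case False
      have E: "h1 \<in> univ (Gk k g A) \<rightarrow>\<^sub>E univ B" "h2 \<in> univ (Gk k g A) \<rightarrow>\<^sub>E univ B"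
        using h1 h2 unfolding homs_def by auto
      show ?thesis using PiE_arb[OF E(1) False] PiE_arb[OF E(2) False] by simp
    qed
  qed
qed

lemma h2s_surj:
  assumes S: "S \<in> win_strategies k g A B"
  shows "\<exists>h \<in> homs (Gk k g A) B. hom_to_strategy k g A h = S"
proof -
  define h where "h = (\<lambda>C\<in>univ (Gk k g A). S (fst (SOME x. x\<in>C)) (snd (SOME x. x\<in>C)))"
  have SPi: "S \<in> (\<Pi>\<^sub>E p \<in> plays k g A. last p \<rightarrow>\<^sub>E univ B)" using S by (simp add: win_strategies_def)
  have hcls: "h (pcls k g A p a) = S p a" if pa: "(p,a) \<in> fplays k g A" for p a
  proof -
    define x where "x = (SOME x. x \<in> pcls k g A p a)"
    have "x \<in> pcls k g A p a" unfolding x_def using pcls_self[OF pa] by (rule someI)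
    then have e: "((p,a), (fst x, snd x)) \<in> play_equiv k g A" by (simp add: pcls_def)
    have "h (pcls k g A p a) = S (fst x) (snd x)"
      using pcls_in[OF pa] unfolding h_def x_def by simp
    also have "\<dots> = S p a" using strat_equiv[OF S e] by simp
    finally show ?thesis .
  qed
  have hU: "h C \<in> univ B" if C: "C \<in> univ (Gk k g A)" for C
  proof -
    obtain p a where pa: "(p,a) \<in> fplays k g A" "C = pcls k g A p a" using C by (rule univ_Gk_cases)
    then have "p \<in> plays k g A" "a \<in> last p" by (auto simp: fplays_def)
    then have "S p a \<in> univ B" using SPi by blast
    then show ?thesis using hcls pa by simp
  qed
  have hrel: "map h t' \<in> rels B R" if T: "t' \<in> rels (Gk k g A) R" for R t'
  proof -
    obtain p t where pt: "t' = map (pcls k g A p) t" "p \<in> plays k g A" "t \<in> rels A R" "set t \<subseteq> last p"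
      using T unfolding rels_Gk by blast
    have "map h t' = map (S p) t" unfolding pt(1) map_map
    proof (rule map_cong[OF refl])
      fix x assume "x \<in> set t"
      then have "(p,x) \<in> fplays k g A" using pt by (auto simp: fplays_def)
      then show "(h \<circ> pcls k g A p) x = S p x" using hcls by simp
    qed
    moreover have "partial_hom A B (last p) (S p)" using S pt(2) by (simp add: win_strategies_def)
    then have "map (S p) t \<in> rels B R" using pt unfolding partial_hom_def by blast
    ultimately show ?thesis by metis
  qed
  have hE: "h \<in> univ (Gk k g A) \<rightarrow>\<^sub>E univ B"
  proof (rule PiE_I)
    fix C assume "C \<in> univ (Gk k g A)" then show "h C \<in> univ B" by (rule hU)
  next
    fix C assume "C \<notin> univ (Gk k g A)" then show "h C = undefined" unfolding h_def by simp
  qed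
  have hh: "h \<in> homs (Gk k g A) B"
    unfolding homs_def is_hom_def
  proof (intro CollectI conjI allI impI)
    show "h \<in> univ (Gk k g A) \<rightarrow> univ B" using hU by (rule Pi_I)
  qed (use hE hrel in auto)
  have "hom_to_strategy k g A h = S"
  proof
    fix p
    show "hom_to_strategy k g A h p = S p"
    proof (cases "p \<in> plays k g A")
      case True
      show ?thesis
      proof
        fix a
        show "hom_to_strategy k g A h p a = S p a"
        proof (cases "a \<in> last p")
          case True
          then show ?thesis using \<open>p \<in> plays k g A\<close> hcls by (simp add: hom_to_strategy_def fplays_def)
        next
          case False
          have "S p \<in> last p \<rightarrow>\<^sub>E univ B" using SPi \<open>p \<in> plays k g A\<close> by blast
          then have "S p a = undefined" using False by (rule PiE_arb)
          then show ?thesis using False \<open>p \<in> plays k g A\<close> by (simp add: hom_to_strategy_def)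
        qed
      qed
    next
      case False
      then have "S p = undefined" using SPi PiE_arb by metis
      then show ?thesis using False by (simp add: hom_to_strategy_def)
    qed
  qed
  then show ?thesis using hh by blast
qed

theorem theorem3p8:
  fixes ar :: "'r \<Rightarrow> nat" and k :: nat and g :: guard
    and A :: "('r, 'a) struc" and B :: "('r, 'b) struc"
  assumes "k > 0" and "wf_struc ar A" and "wf_struc ar B"
  shows "bij_betw (hom_to_strategy k g A) (homs (Gk k g A) B) (win_strategies k g A B)
         \<and> (guarded_sim k g A B \<longleftrightarrow> (\<exists>h. is_hom (Gk k g A) B h))"
proof
  have "hom_to_strategy k g A ` homs (Gk k g A) B = win_strategies k g A B"
    using h2s_win h2s_surj by blast
  then show "bij_betw (hom_to_strategy k g A) (homs (Gk k g A) B) (win_strategies k g A B)"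
    using h2s_inj by (rule bij_betw_imageI[rotated])
  show "guarded_sim k g A B \<longleftrightarrow> (\<exists>h. is_hom (Gk k g A) B h)"
  proof
    assume "guarded_sim k g A B"
    then obtain S where "S \<in> win_strategies k g A B" unfolding guarded_sim_def by blast
    then obtain h where "h \<in> homs (Gk k g A) B" using h2s_surj by blast
    then show "\<exists>h. is_hom (Gk k g A) B h" unfolding homs_def by blast
  next
    assume "\<exists>h. is_hom (Gk k g A) B h"
    then obtain h where h: "is_hom (Gk k g A) B h" by blast
    have sub: "set t \<subseteq> univ (Gk k g A)" if T: "t \<in> rels (Gk k g A) R" for t R
    proof -
      obtain p t0 where pt: "t = map (pcls k g A p) t0" "p \<in> plays k g A" "set t0 \<subseteq> last p"
        using T unfolding rels_Gk by blast
      have "pcls k g A p x \<in> univ (Gk k g A)" if "x \<in> set t0" for x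
        using pcls_in[of p x k g A] pt that unfolding fplays_def by blast
      then show ?thesis using pt by auto
    qed
    define h' where "h' = restrict h (univ (Gk k g A))"
    have eqm: "map h' t = map h t" if "t \<in> rels (Gk k g A) R" for t R
      using sub[OF that] by (auto simp: h'_def)
    have E: "h' \<in> univ (Gk k g A) \<rightarrow>\<^sub>E univ B" using h unfolding is_hom_def h'_def by auto
    have "\<forall>R t. t \<in> rels (Gk k g A) R \<longrightarrow> map h' t \<in> rels B R"
    proof (intro allI impI)
      fix R t assume t: "t \<in> rels (Gk k g A) R"
      then have "map h t \<in> rels B R" using h unfolding is_hom_def by blast
      then show "map h' t \<in> rels B R" unfolding eqm[OF t] .
    qed
    then have "h' \<in> homs (Gk k g A) B" using E
      unfolding homs_def is_hom_def by (auto simp: PiE_iff)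
    then show "guarded_sim k g A B" unfolding guarded_sim_def using h2s_win by blast
  qed
qed

end
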